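(* There is an absolute constant $C>0$ such that for every positive integer $d$ and all $\alpha,\beta\in[0,1]$ with $\alpha>\beta$, the $(\alpha,\beta,d,\ell)$-InnerProduct problem can be solved with space \[ \ell \le d\log_2\!\left(\frac{\sqrt{1-\beta}}{\alpha-\beta}\right)+C d . \]
   Context: $\mathbb{S}^{d-1}$ denotes the Euclidean unit sphere in $\mathbb{R}^d$, and $\langle x,y\rangle=\sum_{i=1}^d x_iy_i$. For positive integers $d,\ell$ and $\alpha,\beta\in[0,1]$ with $\alpha>\beta$, the $(\alpha,\beta,d,\ell)$-InnerProduct problem is to construct maps $\mathcal{E}:\mathbb{S}^{d-1}\to\{0,1\}^\ell$ and $\mathcal{D}:\{0,1\}^\ell\to\mathbb{S}^{d-1}$ and a threshold $t\in\mathbb{R}$ such that for all $x,y\in\mathbb{S}^{d-1}$: - if $\langle x,y\rangle\ge\alpha$ then $\langle \mathcal{D}(\mathcal{E}(x)),\mathcal{D}(\mathcal{E}(y))\rangle\ge t$; - if $\langle x,y\rangle\le\beta$ then $\langle \mathcal{D}(\mathcal{E}(x)),\mathcal{D}(\mathcal{E}(y))\rangle< t$. The problem is solved with space $\ell$ if such $\mathcal{E},\mathcal{D},t$ exist. *)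

theory Defs
  imports "HOL-Analysis.Analysis"
begin

text \<open>Vectors in R^d are real lists of length d (d varies inside the statement).\<close>

definition ip :: "real list \<Rightarrow> real list \<Rightarrow> real" where
  "ip x y = (\<Sum>i<length x. x ! i * y ! i)"

definition unit_sphere :: "nat \<Rightarrow> real list set" where
  "unit_sphere d = {x. length x = d \<and> ip x x = 1}"

definition bitstrings :: "nat \<Rightarrow> bool list set" where
  "bitstrings l = {b. length b = l}"

definition inner_product_solvable :: "real \<Rightarrow> real \<Rightarrow> nat \<Rightarrow> nat \<Rightarrow> bool" where
  "inner_product_solvable \<alpha> \<beta> d l \<longleftrightarrow>
     (\<exists>(E :: real list \<Rightarrow> bool list) (D :: bool list \<Rightarrow> real list) (t :: real).
        (\<forall>x\<in>unit_sphere d. E x \<in> bitstrings l) \<and>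
        (\<forall>b\<in>bitstrings l. D b \<in> unit_sphere d) \<and>
        (\<forall>x\<in>unit_sphere d. \<forall>y\<in>unit_sphere d.
           (ip x y \<ge> \<alpha> \<longrightarrow> ip (D (E x)) (D (E y)) \<ge> t) \<and>
           (ip x y \<le> \<beta> \<longrightarrow> ip (D (E x)) (D (E y)) < t)))"

end

theory Submission
  imports Defs
begin

definition dst :: "nat \<Rightarrow> real list \<Rightarrow> real list \<Rightarrow> real" where
  "dst d x y = L2_set (\<lambda>i. x!i - y!i) {..<d}"

lemma dst_tri: "dst d x z \<le> dst d x y + dst d y z"
  unfolding dst_def using L2_set_triangle_ineq[of "\<lambda>i. x!i - y!i" "\<lambda>i. y!i - z!i" "{..<d}"]
  by simp

lemma dst_sym: "dst d x y = dst d y x"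
  unfolding dst_def L2_set_def by (simp add: power2_commute)

lemma dst_nonneg: "0 \<le> dst d x y" unfolding dst_def by simp

lemma dst_sq:
  assumes "x \<in> unit_sphere d" "y \<in> unit_sphere d"
  shows "(dst d x y)^2 = 2 - 2 * ip x y"
proof -
  have lx: "length x = d" and ly: "length y = d" and sx: "(\<Sum>i<d. x!i * x!i) = 1" and sy: "(\<Sum>i<d. y!i * y!i) = 1"
    using assms by (auto simp: unit_sphere_def ip_def)
  have "(dst d x y)^2 = (\<Sum>i<d. (x!i - y!i)^2)"
    unfolding dst_def L2_set_def by (simp add: sum_nonneg)
  also have "\<dots> = (\<Sum>i<d. x!i * x!i + y!i * y!i - 2 * (x!i * y!i))"
    by (rule sum.cong) (auto simp: power2_eq_square algebra_simps)
  also have "\<dots> = 2 - 2 * (\<Sum>i<d. x!i * y!i)"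
    using sx sy by (simp add: sum.distrib sum_subtractf sum_distrib_left)
  finally show ?thesis using lx by (simp add: ip_def)
qed

lemma separation:
  fixes \<alpha> \<beta> \<delta> :: real
  assumes ab: "0 \<le> \<beta>" "\<beta> < \<alpha>" "\<alpha> \<le> 1"
  defines "a \<equiv> sqrt (2 - 2*\<alpha>)" and "b \<equiv> sqrt (2 - 2*\<beta>)"
  assumes dl: "\<delta> = (b - a) / 5"
  assumes x: "x \<in> unit_sphere d" "y \<in> unit_sphere d" "x' \<in> unit_sphere d" "y' \<in> unit_sphere d"
    and dx: "dst d x x' \<le> \<delta>" and dy: "dst d y y' \<le> \<delta>"
  shows "(ip x y \<ge> \<alpha> \<longrightarrow> ip x' y' \<ge> 1 - ((a+b)/2)^2/2) \<and>
         (ip x y \<le> \<beta> \<longrightarrow> ip x' y' < 1 - ((a+b)/2)^2/2)"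
proof -
  have a0: "0 \<le> a" unfolding a_def using ab by simp
  have ab': "a < b" unfolding a_def b_def using ab(2) by (intro real_sqrt_less_mono) linarith
  have t1: "dst d x' y' \<le> dst d x y + 2*\<delta>"
    using dst_tri[of d x' y' x] dst_tri[of d x y' y] dst_sym[of d x' x] dx dy by linarith
  have t2: "dst d x y \<le> dst d x' y' + 2*\<delta>"
    using dst_tri[of d x y x'] dst_tri[of d x' y y'] dst_sym[of d y' y] dx dy by linarith
  have e1: "ip x' y' = 1 - (dst d x' y')^2/2" using dst_sq[OF x(3,4)] by (simp add: field_simps)
  have e0: "dst d x y = sqrt (2 - 2 * ip x y)" using dst_sq[OF x(1,2)] dst_nonneg[of d x y]
    by (metis real_sqrt_unique)
  show ?thesis
  proof (intro conjI impI)
    assume "\<alpha> \<le> ip x y"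
    then have "dst d x y \<le> a" unfolding e0 a_def by simp
    moreover have "a + 2*\<delta> \<le> (a+b)/2" using ab' unfolding dl by (simp add: field_simps)
    ultimately have "dst d x' y' \<le> (a+b)/2" using t1 by linarith
    then have "(dst d x' y')^2 \<le> ((a+b)/2)^2" using dst_nonneg power_mono by blast
    then show "ip x' y' \<ge> 1 - ((a+b)/2)^2/2" using e1 by simp
  next
    assume "ip x y \<le> \<beta>"
    then have "dst d x y \<ge> b" unfolding e0 b_def by simp
    moreover have "b - 2*\<delta> > (a+b)/2" using ab' unfolding dl by (simp add: field_simps)
    ultimately have "dst d x' y' > (a+b)/2" using t2 by linarith
    then have "(dst d x' y')^2 > ((a+b)/2)^2" 
      by (intro power_strict_mono) (use a0 ab' in auto)
    then show "ip x' y' < 1 - ((a+b)/2)^2/2" using e1 by simp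
  qed
qed

lemma L2_set_abs: "L2_set (\<lambda>i. \<bar>f i\<bar>) A = L2_set f A"
  unfolding L2_set_def by simp

lemma L2_set_scale: "L2_set (\<lambda>i. c * f i) A = \<bar>c\<bar> * L2_set f A"
proof -
  have "L2_set (\<lambda>i. c * f i) A = L2_set (\<lambda>i. \<bar>c\<bar> * f i) A"
    unfolding L2_set_def by (simp add: power_mult_distrib)
  also have "\<dots> = \<bar>c\<bar> * L2_set f A" by (simp add: L2_set_right_distrib)
  finally show ?thesis .
qed

lemma L2_tri: "L2_set (\<lambda>i. f i - h i) A \<le> L2_set (\<lambda>i. f i - g i) A + L2_set (\<lambda>i. g i - h i) A"
  using L2_set_triangle_ineq[of "\<lambda>i. f i - g i" "\<lambda>i. g i - h i" A] by simp

lemma L2_rev_tri: "L2_set f A \<le> L2_set g A + L2_set (\<lambda>i. f i - g i) A"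
  using L2_set_triangle_ineq[of "\<lambda>i. f i - g i" g A] by simp

definition qz :: "real \<Rightarrow> real list \<Rightarrow> int list" where
  "qz N x = map (\<lambda>v. round (N * v)) x"

definition nz :: "int list \<Rightarrow> real list" where
  "nz z = map (\<lambda>v. real_of_int v / L2_set (\<lambda>i. real_of_int (z!i)) {..<length z}) z"

lemma sphere_L2: "x \<in> unit_sphere d \<Longrightarrow> L2_set (\<lambda>i. x!i) {..<d} = 1 \<and> length x = d"
  by (auto simp: unit_sphere_def ip_def L2_set_def power2_eq_square)

lemma net_point:
  assumes x: "x \<in> unit_sphere d" and d: "d \<ge> 1" and dl: "0 < \<delta>" "\<delta> \<le> 1"
  defines "N \<equiv> sqrt d / \<delta>"
  shows "nz (qz N x) \<in> unit_sphere d" "dst d x (nz (qz N x)) \<le> \<delta>"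
    "(\<Sum>i<d. nat \<bar>qz N x ! i\<bar>) \<le> nat \<lfloor>real d / \<delta> + real d\<rfloor>" "length (qz N x) = d"
proof -
  define r where "r = (\<lambda>i. real_of_int (round (N * x!i)))"
  define L where "L = L2_set r {..<d}"
  have lx: "length x = d" and x1: "L2_set (\<lambda>i. x!i) {..<d} = 1" using sphere_L2[OF x] by auto
  have lq: "length (qz N x) = d" using lx by (simp add: qz_def)
  then show "length (qz N x) = d" .
  have N0: "N > 0" unfolding N_def using d dl by simp
  have qi: "\<And>i. i < d \<Longrightarrow> real_of_int (qz N x ! i) = r i" using lx by (simp add: qz_def r_def)
  have Lq: "L2_set (\<lambda>i. real_of_int (qz N x ! i)) {..<d} = L"
    unfolding L_def by (rule L2_set_cong) (auto simp: qi)
  have nzi: "\<And>i. i < d \<Longrightarrow> nz (qz N x) ! i = r i / L"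
    using lq by (simp add: nz_def lq Lq qi)
  have lnz: "length (nz (qz N x)) = d" using lq by (simp add: nz_def)
  define w where "w = (\<lambda>i. r i / N)"
  have err: "\<And>i. \<bar>x!i - w i\<bar> \<le> 1/(2*N)"
  proof -
    fix i
    have "\<bar>r i - N * x!i\<bar> \<le> 1/2" unfolding r_def by (rule of_int_round_abs_le)
    then have "\<bar>(r i - N * x!i) / N\<bar> \<le> 1/(2*N)" using N0 by (simp add: field_simps)
    moreover have "(r i - N * x!i) / N = w i - x!i" using N0 by (simp add: w_def field_simps)
    ultimately show "\<bar>x!i - w i\<bar> \<le> 1/(2*N)" by (simp add: abs_minus_commute)
  qed
  define \<epsilon> where "\<epsilon> = L2_set (\<lambda>i. x!i - w i) {..<d}"
  have "\<epsilon> = L2_set (\<lambda>i. \<bar>x!i - w i\<bar>) {..<d}" unfolding \<epsilon>_def L2_set_abs ..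
  also have "\<dots> \<le> L2_set (\<lambda>i. 1/(2*N)) {..<d}" by (rule L2_set_mono) (use err in auto)
  also have "\<dots> = sqrt d * (1/(2*N))" using N0 by (simp add: L2_set_constant)
  also have "\<dots> = \<delta>/2" unfolding N_def using d dl by (simp add: field_simps)
  finally have e2: "\<epsilon> \<le> \<delta>/2" .
  have Lw: "L2_set w {..<d} = L / N" unfolding w_def L_def
    using L2_set_scale[of "1/N" r] N0 by (simp add: field_simps)
  have "1 \<le> L2_set w {..<d} + \<epsilon>" unfolding \<epsilon>_def using L2_rev_tri[of "\<lambda>i. x!i" "{..<d}" w] x1 by simp
  moreover have "L2_set w {..<d} \<le> 1 + \<epsilon>"
  proof -
    have "L2_set (\<lambda>i. w i - x!i) {..<d} = \<epsilon>" unfolding \<epsilon>_def L2_set_def by (simp add: power2_commute)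
    then show ?thesis using L2_rev_tri[of w "{..<d}" "\<lambda>i. x!i"] x1 by simp
  qed
  ultimately have close: "\<bar>L / N - 1\<bar> \<le> \<epsilon>" unfolding Lw by linarith
  have L0: "L > 0"
  proof -
    have "L / N > 0" using close e2 dl by linarith
    then show ?thesis using N0 by (simp add: zero_less_divide_iff)
  qed
  have "dst d x (nz (qz N x)) = L2_set (\<lambda>i. x!i - r i / L) {..<d}"
    unfolding dst_def by (rule L2_set_cong) (auto simp: nzi)
  also have "\<dots> \<le> \<epsilon> + L2_set (\<lambda>i. w i - r i / L) {..<d}" unfolding \<epsilon>_def by (rule L2_tri)
  also have "L2_set (\<lambda>i. w i - r i / L) {..<d} = L2_set (\<lambda>i. (1/N - 1/L) * r i) {..<d}"
    unfolding w_def by (rule L2_set_cong) (auto simp: field_simps)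
  also have "\<dots> = \<bar>1/N - 1/L\<bar> * L" unfolding L2_set_scale L_def ..
  also have "\<dots> = \<bar>L/N - 1\<bar>" using L0 by (simp add: abs_mult_pos' field_simps flip: abs_mult)
  finally show "dst d x (nz (qz N x)) \<le> \<delta>" using close e2 by linarith
  show "nz (qz N x) \<in> unit_sphere d"
  proof -
    have L2s: "L^2 = (\<Sum>i<d. (r i)^2)" unfolding L_def L2_set_def by (simp add: sum_nonneg)
    have "ip (nz (qz N x)) (nz (qz N x)) = (\<Sum>i<d. (r i)^2) / L^2"
      unfolding ip_def lnz by (simp add: nzi sum_divide_distrib power2_eq_square)
    also have "\<dots> = 1" using L0 by (simp flip: L2s)
    finally show ?thesis using lnz by (simp add: unit_sphere_def)
  qed
  have s1: "(\<Sum>i<d. \<bar>x!i\<bar>) \<le> sqrt d"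
    using L2_set_mult_ineq[of "\<lambda>i. x!i" "\<lambda>i. 1" "{..<d}"] x1 by (simp add: L2_set_constant)
  have "real (\<Sum>i<d. nat \<bar>qz N x ! i\<bar>) = (\<Sum>i<d. \<bar>r i\<bar>)"
    by (simp add: qi[symmetric])
  also have "\<dots> \<le> (\<Sum>i<d. N * \<bar>x!i\<bar> + 1/2)"
  proof (rule sum_mono)
    fix i
    have "\<bar>r i - N * x!i\<bar> \<le> 1/2" unfolding r_def by (rule of_int_round_abs_le)
    then show "\<bar>r i\<bar> \<le> N * \<bar>x!i\<bar> + 1/2" 
    proof -
      have "\<bar>N * x!i\<bar> = N * \<bar>x!i\<bar>" using N0 by (simp add: abs_mult)
      moreover have "\<bar>r i\<bar> \<le> \<bar>r i - N * x!i\<bar> + \<bar>N * x!i\<bar>"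
        using abs_triangle_ineq[of "r i - N * x!i" "N * x!i"] by simp
      ultimately show ?thesis using \<open>\<bar>r i - N * x!i\<bar> \<le> 1/2\<close> by linarith
    qed
  qed
  also have "\<dots> = N * (\<Sum>i<d. \<bar>x!i\<bar>) + d/2" by (simp add: sum.distrib sum_distrib_left)
  also have "\<dots> \<le> N * sqrt d + d/2" using s1 N0 by simp
  also have "N * sqrt d = d / \<delta>" unfolding N_def by simp
  finally have "real (\<Sum>i<d. nat \<bar>qz N x ! i\<bar>) \<le> real d / \<delta> + real d" by simp
  then show "(\<Sum>i<d. nat \<bar>qz N x ! i\<bar>) \<le> nat \<lfloor>real d / \<delta> + real d\<rfloor>"
    by (rule le_nat_floor)
qed

definition Zset :: "nat \<Rightarrow> nat \<Rightarrow> int list set" where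
  "Zset d M = {z. length z = d \<and> (\<Sum>i<d. nat \<bar>z!i\<bar>) \<le> M}"

lemma Zset_card: "finite (Zset d M) \<and> card (Zset d M) \<le> ((M + d) choose M) * 2^d"
proof -
  let ?A = "{l::nat list. size l = d + 1 \<and> sum_list l = M}"
  let ?B = "{b::bool list. length b = d}"
  define \<phi> where "\<phi> = (\<lambda>z::int list. (map (\<lambda>v. nat \<bar>v\<bar>) z @ [M - sum_list (map (\<lambda>v. nat \<bar>v\<bar>) z)],
                                 map (\<lambda>v. v < 0) z))"
  have cA: "card ?A = (M + d) choose M" using card_length_sum_list[of "d+1" M] by simp
  have fA: "finite ?A" using cA by (intro card_ge_0_finite) simp
  have B_eq: "?B = {xs. set xs \<subseteq> UNIV \<and> length xs = d}" by simp
  have cB: "card ?B = 2^d" unfolding B_eq card_lists_length_eq[of "UNIV::bool set", OF finite] by simp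
  have fB: "finite ?B" unfolding B_eq by (rule finite_lists_length_eq) simp
  have sl: "\<And>z. length z = d \<Longrightarrow> sum_list (map (\<lambda>v. nat \<bar>v\<bar>) z) = (\<Sum>i<d. nat \<bar>z!i\<bar>)"
    by (simp add: sum_list_sum_nth atLeast0LessThan)
  have img: "\<phi> ` Zset d M \<subseteq> ?A \<times> ?B"
  proof
    fix p assume "p \<in> \<phi> ` Zset d M"
    then obtain z where z: "z \<in> Zset d M" and p: "p = \<phi> z" by auto
    have lz: "length z = d" and s: "(\<Sum>i<d. nat \<bar>z!i\<bar>) \<le> M" using z by (auto simp: Zset_def)
    show "p \<in> ?A \<times> ?B" using lz s sl[OF lz] unfolding p \<phi>_def by auto
  qed
  have inj: "inj_on \<phi> (Zset d M)"
  proof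
    fix z z' assume z: "z \<in> Zset d M" and z': "z' \<in> Zset d M" and e: "\<phi> z = \<phi> z'"
    have lz: "length z = d" "length z' = d" using z z' by (auto simp: Zset_def)
    from e have e1: "map (\<lambda>v. nat \<bar>v\<bar>) z = map (\<lambda>v. nat \<bar>v\<bar>) z'" and e2: "map (\<lambda>v. v < 0) z = map (\<lambda>v. v < 0) z'"
      unfolding \<phi>_def using lz by auto
    show "z = z'"
    proof (rule nth_equalityI)
      show "length z = length z'" using lz by simp
      fix i assume "i < length z"
      then have "nat \<bar>z!i\<bar> = nat \<bar>z'!i\<bar>" "(z!i < 0) = (z'!i < 0)"
        using arg_cong[OF e1, of "\<lambda>l. l!i"] arg_cong[OF e2, of "\<lambda>l. l!i"] lz by auto
      then show "z!i = z'!i" by linarith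
    qed
  qed
  have fT: "finite (?A \<times> ?B)" using fA fB by simp
  have "card (Zset d M) \<le> card (?A \<times> ?B)" by (rule card_inj_on_le[OF inj img fT])
  moreover have "finite (Zset d M)" using finite_imageD[OF finite_subset[OF img fT] inj] .
  ultimately show ?thesis using cA cB by (simp add: card_cartesian_product)
qed

lemma pow_fact_le_exp: "real d ^ d / fact d \<le> exp (real d)"
proof -
  have "real d ^ d / fact d \<le> (\<Sum>n\<in>{..d}. real d ^ n / fact n)"
    by (rule member_le_sum) auto
  also have "\<dots> \<le> exp (real d)"
    using summable_exp_generic[of "real d"]
    by (auto simp: exp_def divide_inverse ac_simps intro!: sum_le_suminf)
  finally show ?thesis .
qed

lemma choose_bound:
  assumes "d \<ge> 1"
  shows "real ((M + d) choose M) \<le> (exp 1 * (real M + real d) / real d) ^ d"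
proof -
  have "(M + d) choose M = (M + d) choose d" by (simp add: binomial_symmetric[of d "M+d"])
  then have "real ((M + d) choose M) * fact d \<le> real (M+d) ^ d"
    using binomial_fact_pow[of "M+d" d] by (metis of_nat_fact of_nat_le_iff of_nat_mult of_nat_power)
  then have "real ((M + d) choose M) \<le> real (M+d) ^ d / fact d"
    by (simp add: field_simps)
  also have "\<dots> = (real (M+d) / real d) ^ d * (real d ^ d / fact d)"
    using assms by (simp add: field_simps power_divide)
  also have "\<dots> \<le> (real (M+d) / real d) ^ d * exp (real d)"
    by (rule mult_left_mono[OF pow_fact_le_exp]) simp
  also have "exp (real d) = exp 1 ^ d" by (simp add: exp_of_nat_mult[symmetric])
  also have "(real (M+d) / real d) ^ d * exp 1 ^ d = (exp 1 * (real M + real d) / real d) ^ d"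
    by (simp add: power_mult_distrib[symmetric] field_simps)
  finally show ?thesis .
qed

lemma net_exists:
  assumes d: "d \<ge> 1" and dl: "0 < \<delta>" "\<delta> \<le> 1"
  shows "\<exists>F. (\<forall>x\<in>unit_sphere d. F x \<in> unit_sphere d \<and> dst d x (F x) \<le> \<delta>) \<and>
             finite (F ` unit_sphere d) \<and> real (card (F ` unit_sphere d)) \<le> (6 * exp 1 / \<delta>) ^ d"
proof -
  define N where "N = sqrt d / \<delta>"
  define M where "M = nat \<lfloor>real d / \<delta> + real d\<rfloor>"
  define F where "F = (\<lambda>x. nz (qz N x))"
  note np = net_point[OF _ d dl, folded N_def]
  have sub: "F ` unit_sphere d \<subseteq> nz ` Zset d M"
  proof
    fix q assume "q \<in> F ` unit_sphere d"
    then obtain x where x: "x \<in> unit_sphere d" "q = F x" by auto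
    have "qz N x \<in> Zset d M" using np(3,4)[OF x(1)] unfolding Zset_def M_def by auto
    then show "q \<in> nz ` Zset d M" unfolding x F_def by auto
  qed
  have fZ: "finite (Zset d M)" and cZ: "card (Zset d M) \<le> ((M + d) choose M) * 2^d"
    using Zset_card by auto
  have fin: "finite (F ` unit_sphere d)" using finite_subset[OF sub] fZ by auto
  have "card (F ` unit_sphere d) \<le> card (nz ` Zset d M)" by (rule card_mono[OF _ sub]) (use fZ in auto)
  also have "\<dots> \<le> card (Zset d M)" by (rule card_image_le[OF fZ])
  also have "\<dots> \<le> ((M + d) choose M) * 2^d" by (rule cZ)
  finally have c1: "real (card (F ` unit_sphere d)) \<le> real ((M + d) choose M) * 2^d"
    by (metis of_nat_le_iff of_nat_mult of_nat_numeral of_nat_power)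
  have Mb: "real M \<le> real d / \<delta> + real d" unfolding M_def
    by (rule of_nat_floor) (use dl in auto)
  have dpos: "real d > 0" using d by simp
  have "exp 1 * (real M + real d) / real d \<le> exp 1 * (real d / \<delta> + 2 * real d) / real d"
    using Mb dpos by (intro divide_right_mono mult_left_mono) auto
  also have "\<dots> = exp 1 * (1/\<delta> + 2)" using dpos dl by (simp add: field_simps)
  also have "\<dots> \<le> exp 1 * (3 / \<delta>)"
  proof -
    have "2 \<le> 2 / \<delta>" using dl by (simp add: field_simps)
    then show ?thesis by (intro mult_left_mono) auto
  qed
  finally have e1: "exp 1 * (real M + real d) / real d \<le> 3 * exp 1 / \<delta>" by (simp add: mult.commute)
  have "real ((M + d) choose M) \<le> (exp 1 * (real M + real d) / real d) ^ d"
    by (rule choose_bound[OF d])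
  also have "\<dots> \<le> (3 * exp 1 / \<delta>) ^ d"
    by (rule power_mono[OF e1]) (use dpos in auto)
  finally have "real ((M + d) choose M) * 2^d \<le> (3 * exp 1 / \<delta>) ^ d * 2^d" by simp
  also have "\<dots> = (6 * exp 1 / \<delta>) ^ d" by (simp add: power_mult_distrib[symmetric])
  finally have "real (card (F ` unit_sphere d)) \<le> (6 * exp 1 / \<delta>) ^ d" using c1 by linarith
  moreover have "\<forall>x\<in>unit_sphere d. F x \<in> unit_sphere d \<and> dst d x (F x) \<le> \<delta>"
    using np(1,2) unfolding F_def by auto
  ultimately show ?thesis using fin by blast
qed

lemma sphere_nonempty:
  assumes "d \<ge> 1" shows "(1 # replicate (d - 1) 0) \<in> unit_sphere d"
proof -
  obtain k where k: "d = Suc k" using assms by (cases d) auto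
  have "(\<Sum>i<Suc k. (1 # replicate k 0) ! i * (1 # replicate k (0::real)) ! i) = 1"
    by (subst sum.lessThan_Suc_shift) simp
  then show ?thesis using k by (simp add: unit_sphere_def ip_def)
qed

lemma card_bitstrings: "card (bitstrings l) = 2^l" "finite (bitstrings l)"
proof -
  have B_eq: "bitstrings l = {xs. set xs \<subseteq> (UNIV::bool set) \<and> length xs = l}" by (simp add: bitstrings_def)
  show "card (bitstrings l) = 2^l" unfolding B_eq card_lists_length_eq[of "UNIV::bool set", OF finite] by simp
  show "finite (bitstrings l)" unfolding B_eq by (rule finite_lists_length_eq) simp
qed

theorem mainTheorem1:
  shows "\<exists>C::real. C > 0 \<and>
    (\<forall>(d::nat) (\<alpha>::real) (\<beta>::real). d \<ge> 1 \<longrightarrow> 0 \<le> \<beta> \<longrightarrow> \<beta> < \<alpha> \<longrightarrow> \<alpha> \<le> 1 \<longrightarrow>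
       (\<exists>l::nat. l \<ge> 1 \<and> inner_product_solvable \<alpha> \<beta> d l \<and>
          real l \<le> real d * log 2 (sqrt (1 - \<beta>) / (\<alpha> - \<beta>)) + C * real d))"
proof (rule exI[of _ "9::real"], intro conjI allI impI)
  fix d :: nat and \<alpha> \<beta> :: real
  assume d: "d \<ge> 1" and ab: "0 \<le> \<beta>" "\<beta> < \<alpha>" "\<alpha> \<le> 1"
  define a where "a = sqrt (2 - 2*\<alpha>)"
  define b where "b = sqrt (2 - 2*\<beta>)"
  define \<delta> where "\<delta> = (b - a) / 5"
  define K where "K = 6 * exp 1 / \<delta>"
  define R where "R = sqrt (1 - \<beta>) / (\<alpha> - \<beta>)"
  define l where "l = nat \<lceil>real d * log 2 K\<rceil>"
  have a0: "0 \<le> a" unfolding a_def using ab by simp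
  have ab': "a < b" unfolding a_def b_def using ab(2) by (intro real_sqrt_less_mono) linarith
  have b2: "b \<le> 2"
  proof -
    have "b \<le> sqrt 4" unfolding b_def using ab by (intro real_sqrt_le_mono) linarith
    then show ?thesis by simp
  qed
  have dpos: "0 < \<delta>" unfolding \<delta>_def using ab' by simp
  have dle: "\<delta> \<le> 1" unfolding \<delta>_def using b2 a0 by simp
  have K1: "K > 1"
  proof -
    have "6 * exp 1 / \<delta> \<ge> 6 * exp 1" using dpos dle by (simp add: field_simps)
    moreover have "exp (1::real) \<ge> 1" by simp
    ultimately show ?thesis unfolding K_def by linarith
  qed
  have lK: "log 2 K > 0" using K1 by simp
  have dlK: "real d * log 2 K > 0" using d lK by simp
  have l1: "l \<ge> 1" unfolding l_def using dlK by linarith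
  have lb: "real d * log 2 K \<le> real l" unfolding l_def by linarith
  have Kd: "K ^ d \<le> 2 ^ l"
  proof -
    have "2 powr (real d * log 2 K) = (2 powr (log 2 K)) powr real d" by (simp add: powr_powr mult.commute)
    also have "\<dots> = K powr real d" using K1 by simp
    also have "\<dots> = K ^ d" using K1 by (simp add: powr_realpow)
    finally have "K ^ d = 2 powr (real d * log 2 K)" by simp
    also have "\<dots> \<le> 2 powr (real l)" using lb by simp
    also have "\<dots> = 2 ^ l" by (simp add: powr_realpow)
    finally show ?thesis .
  qed
  have bsq: "b^2 - a^2 = 2 * (\<alpha> - \<beta>)" unfolding a_def b_def using ab by simp
  have bR: "b = sqrt 2 * sqrt (1 - \<beta>)" unfolding b_def
    by (simp flip: real_sqrt_mult add: algebra_simps)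
  have bpos: "b > 0" using a0 ab' by linarith
  have key: "\<alpha> - \<beta> \<le> b * (b - a)"
  proof -
    have "2 * (\<alpha> - \<beta>) = (b - a) * (b + a)" using bsq by (simp add: power2_eq_square algebra_simps)
    also have "\<dots> \<le> (b - a) * (2 * b)" using ab' a0 by (intro mult_left_mono) auto
    finally show ?thesis by (simp add: algebra_simps)
  qed
  have "1 / \<delta> \<le> 5 * b / (\<alpha> - \<beta>)"
    unfolding \<delta>_def using key ab(2) ab' bpos by (simp add: field_simps)
  also have "\<dots> = 5 * sqrt 2 * R" unfolding R_def bR by simp
  finally have dR: "1 / \<delta> \<le> 5 * sqrt 2 * R" .
  have Rpos: "R > 0" unfolding R_def using ab by simp
  have s2: "sqrt 2 \<le> (3/2::real)" by (rule real_le_lsqrt) (auto simp: power2_eq_square)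
  have "K = 6 * exp 1 * (1 / \<delta>)" unfolding K_def by simp
  also have "\<dots> \<le> 6 * exp 1 * (5 * sqrt 2 * R)" by (rule mult_left_mono[OF dR]) simp
  also have "\<dots> \<le> 6 * 3 * (5 * (3/2) * R)"
    using exp_le s2 Rpos by (intro mult_mono) auto
  also have "\<dots> \<le> 2^8 * R" using Rpos by simp
  finally have KR: "K \<le> 2^8 * R" .
  have "log 2 K \<le> log 2 (2^8 * R)" using KR K1 by simp
  also have "\<dots> = log 2 ((2::real)^8) + log 2 R" by (subst log_mult) (use Rpos in auto)
  also have "log 2 ((2::real)^8) = 8" by (subst log_nat_power) auto
  finally have "real d * log 2 K \<le> real d * (8 + log 2 R)" using d by (intro mult_left_mono) auto
  moreover have "real l \<le> real d * log 2 K + 1"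
  proof -
    have "real l = of_int \<lceil>real d * log 2 K\<rceil>" unfolding l_def using dlK by simp
    then show ?thesis using of_int_ceiling_le_add_one[of "real d * log 2 K"] by linarith
  qed
  moreover have "real d \<ge> 1" using d by simp
  ultimately have lfin: "real l \<le> real d * log 2 R + 9 * real d"
    by (simp add: algebra_simps)
  obtain F where F: "\<forall>x\<in>unit_sphere d. F x \<in> unit_sphere d \<and> dst d x (F x) \<le> \<delta>"
    and fQ: "finite (F ` unit_sphere d)" and cQ: "real (card (F ` unit_sphere d)) \<le> K ^ d"
    using net_exists[OF d dpos dle] unfolding K_def by blast
  define Q where "Q = F ` unit_sphere d"
  have "real (card Q) \<le> 2 ^ l" using cQ Kd unfolding Q_def by linarith
  then have "card Q \<le> card (bitstrings l)" unfolding card_bitstrings(1)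
    by (metis of_nat_le_iff of_nat_numeral of_nat_power)
  then obtain g where g: "g ` Q \<subseteq> bitstrings l" "inj_on g Q"
    using card_le_inj[OF fQ[folded Q_def] card_bitstrings(2)] by blast
  define x0 where "x0 = F (1 # replicate (d - 1) 0)"
  have x0: "x0 \<in> unit_sphere d" unfolding x0_def using F sphere_nonempty[OF d] by blast
  define E where "E = (\<lambda>x. g (F x))"
  define D where "D = (\<lambda>b. if b \<in> g ` Q then inv_into Q g b else x0)"
  define t where "t = 1 - ((a+b)/2)^2/2"
  have FQ: "\<And>x. x \<in> unit_sphere d \<Longrightarrow> F x \<in> Q" unfolding Q_def by auto
  have DE: "\<And>x. x \<in> unit_sphere d \<Longrightarrow> D (E x) = F x"
    unfolding D_def E_def using FQ g(2) by (auto simp: inv_into_f_f)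
  have "inner_product_solvable \<alpha> \<beta> d l"
    unfolding inner_product_solvable_def
  proof (intro exI[of _ E] exI[of _ D] exI[of _ t] conjI ballI)
    fix x assume "x \<in> unit_sphere d"
    then show "E x \<in> bitstrings l" unfolding E_def using FQ g(1) by auto
  next
    fix c assume "c \<in> bitstrings l"
    show "D c \<in> unit_sphere d"
    proof (cases "c \<in> g ` Q")
      case True
      then have "inv_into Q g c \<in> Q" by (auto intro: inv_into_into)
      then show ?thesis using True F unfolding D_def Q_def by auto
    qed (use x0 D_def in auto)
  next
    fix x y assume x: "x \<in> unit_sphere d" and y: "y \<in> unit_sphere d"
    show "ip x y \<ge> \<alpha> \<longrightarrow> ip (D (E x)) (D (E y)) \<ge> t"
      unfolding DE[OF x] DE[OF y] t_def a_def b_def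
      using separation[OF ab \<delta>_def[unfolded a_def b_def] x y] F x y by auto
  next
    fix x y assume x: "x \<in> unit_sphere d" and y: "y \<in> unit_sphere d"
    show "ip x y \<le> \<beta> \<longrightarrow> ip (D (E x)) (D (E y)) < t"
      unfolding DE[OF x] DE[OF y] t_def a_def b_def
      using separation[OF ab \<delta>_def[unfolded a_def b_def] x y] F x y by auto
  qed
  then show "\<exists>l::nat. l \<ge> 1 \<and> inner_product_solvable \<alpha> \<beta> d l \<and>
          real l \<le> real d * log 2 (sqrt (1 - \<beta>) / (\<alpha> - \<beta>)) + 9 * real d"
    using l1 lfin unfolding R_def by blast
qed simp

end
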